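(* Let $\mathcal{T}=(\mathbb{K}_i,\phi_i)_{i=0,\dots,m}$ be a tower with $\mathbb{K}_0=\emptyset$ whose maps are elementary inclusions or elementary contractions (named according to the naming convention below), let $\Delta$ be its dimension, $n$ its number of elementary inclusions, $n_0$ the number of vertex inclusions, and let $\hat{\mathbb{K}}_m$ be the last complex of the active small coning construction. Then $|\hat{\mathbb{K}}_m|\le n+2\cdot(\Delta+1)\cdot n\cdot(1+\log_2 n_0)=O(n\cdot\Delta\cdot\log_2 n_0)$.
   Context: Simplicial complexes are finite abstract simplicial complexes; the dimension of a tower is the maximal dimension of a simplex in any $\mathbb{K}_i$. $\phi_i$ is an elementary inclusion if $\mathbb{K}_{i+1}=\mathbb{K}_i\cup\{\sigma\}$ with $\sigma\notin\mathbb{K}_i$ and $\phi_i$ the inclusion (a vertex inclusion if $\sigma$ is a vertex); it is an elementary contraction of distinct vertices $u,v\in\mathbb{K}_i$ if for one of them, say $v$, the vertex set of $\mathbb{K}_{i+1}$ is that of $\mathbb{K}_i$ minus $v$, $\phi_i(u)=\phi_i(v)=u$, $\phi_i$ is the identity on other vertices, and $\mathbb{K}_{i+1}=\phi_i(\mathbb{K}_i)$. Active small coning construction: $\hat{\mathbb{K}}_0=\emptyset$; vertices of $\hat{\mathbb{K}}_i$ are flagged active/inactive; a simplex is active if all its vertices are. $\mathrm{Act}\overline{\mathrm{St}}(w,\hat{\mathbb{K}}_i)$ is the set of active simplices of $\hat{\mathbb{K}}_i$ in the closed star of $w$ (all faces of simplices containing $w$); $w\ast S=\{\{w\}\cup\tau:\tau\in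 S\}$. On an elementary inclusion of $\sigma$: $\hat{\mathbb{K}}_{i+1}=\hat{\mathbb{K}}_i\cup\{\sigma\}$, a new vertex being marked active. On an elementary contraction of $u,v$: if $|\mathrm{Act}\overline{\mathrm{St}}(u,\hat{\mathbb{K}}_i)|\le|\mathrm{Act}\overline{\mathrm{St}}(v,\hat{\mathbb{K}}_i)|$, set $\hat{\mathbb{K}}_{i+1}=\hat{\mathbb{K}}_i\cup(v\ast\mathrm{Act}\overline{\mathrm{St}}(u,\hat{\mathbb{K}}_i))$ and mark $u$ inactive; otherwise the same with $u,v$ swapped. Naming convention: each contraction maps $u,v$ to the one not marked inactive. *)

theory Defs
  imports Complex_Main
begin

text \<open>Simplices are nonempty finite vertex sets; a complex is a set of simplices.\<close>
type_synonym 'a cplx = "'a set set"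

text \<open>Elementary maps of a tower. \<open>Contr u v\<close> contracts the (unordered) pair u, v;
  which of the two names survives is dictated by the naming convention, i.e. by the
  active small coning construction (the vertex marked inactive disappears).\<close>
datatype 'a elem_op = Incl "'a set" | Contr 'a 'a

definition act_star :: "'a \<Rightarrow> 'a cplx \<Rightarrow> 'a set \<Rightarrow> 'a cplx" where
  "act_star w K A = {\<tau> \<in> K. \<tau> \<subseteq> A \<and> (\<exists>\<rho>\<in>K. w \<in> \<rho> \<and> \<tau> \<subseteq> \<rho>)}"

definition cone :: "'a \<Rightarrow> 'a cplx \<Rightarrow> 'a cplx" where
  "cone w S = {insert w \<tau> | \<tau>. \<tau> \<in> S}"

definition contract_cplx :: "'a \<Rightarrow> 'a \<Rightarrow> 'a cplx \<Rightarrow> 'a cplx" where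
  "contract_cplx u v K = (\<lambda>\<sigma>. (\<lambda>x. if x = u then v else x) ` \<sigma>) ` K"

text \<open>State: (tower complex K_i, coning complex hat K_i, active vertices).\<close>
fun step :: "'a cplx \<times> 'a cplx \<times> 'a set \<Rightarrow> 'a elem_op \<Rightarrow> 'a cplx \<times> 'a cplx \<times> 'a set" where
  "step (K, H, A) (Incl \<sigma>) =
     (insert \<sigma> K, insert \<sigma> H, if card \<sigma> = 1 then A \<union> \<sigma> else A)"
| "step (K, H, A) (Contr u v) =
     (if card (act_star u H A) \<le> card (act_star v H A)
      then (contract_cplx u v K, H \<union> cone v (act_star u H A), A - {u})
      else (contract_cplx v u K, H \<union> cone u (act_star v H A), A - {v}))"

fun states_from :: "'a cplx \<times> 'a cplx \<times> 'a set \<Rightarrow> 'a elem_op list \<Rightarrow> ('a cplx \<times> 'a cplx \<times> 'a set) list" where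
  "states_from s [] = [s]"
| "states_from s (f # fs) = s # states_from (step s f) fs"

definition states :: "'a elem_op list \<Rightarrow> ('a cplx \<times> 'a cplx \<times> 'a set) list" where
  "states fs = states_from ({}, {}, {}) fs"

definition tcplx :: "'a elem_op list \<Rightarrow> nat \<Rightarrow> 'a cplx" where
  "tcplx fs i = fst (states fs ! i)"

definition hat_last :: "'a elem_op list \<Rightarrow> 'a cplx" where
  "hat_last fs = fst (snd (last (states fs)))"

definition valid_tower :: "'a elem_op list \<Rightarrow> bool" where
  "valid_tower fs \<longleftrightarrow> (\<forall>i < length fs.
     (case fs ! i of
        Incl \<sigma> \<Rightarrow> finite \<sigma> \<and> \<sigma> \<noteq> {} \<and> \<sigma> \<notin> tcplx fs i
                 \<and> (\<forall>\<tau>. \<tau> \<subset> \<sigma> \<and> \<tau> \<noteq> {} \<longrightarrow> \<tau> \<in> tcplx fs i)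
                 \<and> (card \<sigma> = 1 \<longrightarrow> (\<forall>j \<le> i. \<sigma> \<notin> tcplx fs j))
      | Contr u v \<Rightarrow> u \<noteq> v \<and> {u} \<in> tcplx fs i \<and> {v} \<in> tcplx fs i))"

definition num_incl :: "'a elem_op list \<Rightarrow> nat" where
  "num_incl fs = length (filter (\<lambda>f. case f of Incl _ \<Rightarrow> True | _ \<Rightarrow> False) fs)"

definition num_vincl :: "'a elem_op list \<Rightarrow> nat" where
  "num_vincl fs = length (filter (\<lambda>f. case f of Incl \<sigma> \<Rightarrow> card \<sigma> = 1 | _ \<Rightarrow> False) fs)"

definition tower_dim :: "'a elem_op list \<Rightarrow> nat" where
  "tower_dim fs = Max (insert 0 {card \<sigma> - 1 | \<sigma> i. i \<le> length fs \<and> \<sigma> \<in> tcplx fs i})"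

end

theory Submission
  imports Defs
begin


definition gsum :: "('a \<Rightarrow> nat) \<Rightarrow> 'a set \<Rightarrow> real" where
  "gsum k \<rho> = (\<Sum>w\<in>\<rho>. log 2 (real (k w)))"
definition psi :: "('a \<Rightarrow> nat) \<Rightarrow> 'a cplx \<Rightarrow> real" where
  "psi k K = (\<Sum>\<rho>\<in>K. gsum k \<rho>)"
definition st :: "'a \<Rightarrow> 'a cplx \<Rightarrow> 'a cplx" where
  "st w K = {\<rho>\<in>K. w\<in>\<rho>}"

lemma log_sum_ge2:
  fixes a b :: nat assumes "1 \<le> a" "1 \<le> b"
  shows "2 \<le> (log 2 (real (a+b)) - log 2 (real a)) + (log 2 (real (a+b)) - log 2 (real b))"
proof -
  have pa: "real a > 0" "real b > 0" using assms by auto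
  have "4 * (real a * real b) \<le> real (a+b) * real (a+b)"
  proof -
    have "0 \<le> (real a - real b)^2" by simp
    thus ?thesis by (simp add: power2_eq_square algebra_simps)
  qed
  hence "log 2 (4 * (real a * real b)) \<le> log 2 (real (a+b) * real (a+b))"
    using pa by (subst log_le_cancel_iff) auto
  moreover have "log 2 (4 * (real a * real b)) = 2 + log 2 (real a) + log 2 (real b)"
  proof -
    have "log 2 ((2::real)^2) = 2" using log_pow_cancel[of "2::real" 2] by simp
    hence "log 2 (4::real) = 2" by simp
    thus ?thesis using pa by (simp add: log_mult)
  qed
  moreover have "log 2 (real (a+b) * real (a+b)) = 2 * log 2 (real (a+b))"
    using pa by (simp add: log_mult)
  ultimately show ?thesis by linarith
qed

lemma merge_potential:
  fixes K :: "'a cplx" and k :: "'a \<Rightarrow> nat" and C :: real and x y :: 'a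
  defines "f \<equiv> (\<lambda>\<rho>. (\<lambda>z. if z = x then y else z) ` \<rho>)"
  assumes fin: "finite K" and sfin: "\<forall>\<rho>\<in>K. finite \<rho> \<and> \<rho> \<noteq> {}"
    and cl: "\<forall>\<rho>\<in>K. \<forall>\<tau>. \<tau> \<subseteq> \<rho> \<and> \<tau> \<noteq> {} \<longrightarrow> \<tau> \<in> K"
    and xy: "x \<noteq> y" and kx: "1 \<le> k x" and ky: "1 \<le> k y"
    and gC: "\<forall>\<rho>\<in>K. gsum k \<rho> \<le> C"
    and sle: "card (st x K) \<le> card (st y K)"
  shows "2 * real (card (st x K)) \<le> psi (k(y := k x + k y)) (f ` K) - psi k K
           + (C + 2) * (real (card K) - real (card (f ` K)))"
proof -
  define k' where "k' = k(y := k x + k y)"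
  have k'y: "k' y = k x + k y" by (simp add: k'_def)
  define R0 where "R0 = {\<rho>\<in>K. x \<notin> \<rho>}"
  define B where "B = {\<rho>\<in>K. x \<in> \<rho> \<and> f \<rho> \<notin> K}"
  define Dd where "Dd = {\<rho>\<in>K. x \<in> \<rho> \<and> f \<rho> \<in> K}"
  define R0y where "R0y = {\<rho>\<in>R0. y \<in> \<rho>}"
  define Lu where "Lu = log 2 (real (k x + k y)) - log 2 (real (k x))"
  define Lv where "Lv = log 2 (real (k x + k y)) - log 2 (real (k y))"
  have fx: "f \<rho> = insert y (\<rho> - {x})" if "x \<in> \<rho>" for \<rho>
    using that unfolding f_def by auto
  have fnx: "f \<rho> = \<rho>" if "x \<notin> \<rho>" for \<rho>
    using that unfolding f_def by auto
  have xnf: "x \<notin> f \<rho>" for \<rho> using xy unfolding f_def by auto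
  have finR0: "finite R0" "finite B" "finite Dd" "finite R0y"
    using fin unfolding R0_def B_def Dd_def R0y_def by auto
  have Kdec: "K = R0 \<union> (B \<union> Dd)" unfolding R0_def B_def Dd_def by auto
  have disj1: "R0 \<inter> (B \<union> Dd) = {}" "B \<inter> Dd = {}" unfolding R0_def B_def Dd_def by auto
  have fK: "f ` K = R0 \<union> f ` B"
  proof
    show "f ` K \<subseteq> R0 \<union> f ` B"
    proof
      fix \<sigma> assume "\<sigma> \<in> f ` K"
      then obtain \<rho> where \<rho>: "\<rho> \<in> K" "\<sigma> = f \<rho>" by auto
      show "\<sigma> \<in> R0 \<union> f ` B"
      proof (cases "x \<in> \<rho>")
        case False thus ?thesis using \<rho> fnx unfolding R0_def by auto
      next
        case True
        show ?thesis
        proof (cases "f \<rho> \<in> K")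
          case True thus ?thesis using \<rho> xnf unfolding R0_def by auto
        next
          case False thus ?thesis using \<rho> \<open>x \<in> \<rho>\<close> unfolding B_def by auto
        qed
      qed
    qed
    show "R0 \<union> f ` B \<subseteq> f ` K"
    proof -
      have "R0 \<subseteq> f ` K"
      proof
        fix \<rho> assume "\<rho> \<in> R0" thus "\<rho> \<in> f ` K" using fnx[of \<rho>] unfolding R0_def by force
      qed
      moreover have "f ` B \<subseteq> f ` K" unfolding B_def by auto
      ultimately show ?thesis by auto
    qed
  qed
  have Bny: "y \<notin> \<rho>" if "\<rho> \<in> B" for \<rho>
  proof
    assume yr: "y \<in> \<rho>"
    from that have r: "\<rho> \<in> K" "x \<in> \<rho>" "f \<rho> \<notin> K" unfolding B_def by auto
    have "f \<rho> = \<rho> - {x}" using fx[OF r(2)] yr xy by auto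
    moreover have "\<rho> - {x} \<in> K"
    proof -
      have "\<rho> - {x} \<subseteq> \<rho>" "\<rho> - {x} \<noteq> {}" using yr xy by auto
      thus ?thesis using cl r(1) by blast
    qed
    ultimately show False using r(3) by simp
  qed
  have injB: "inj_on f B"
  proof (rule inj_onI)
    fix a b assume a: "a \<in> B" and b: "b \<in> B" and e: "f a = f b"
    have "a = insert x (f a - {y})" using fx[of a] a Bny[OF a] unfolding B_def by auto
    moreover have "b = insert x (f b - {y})" using fx[of b] b Bny[OF b] unfolding B_def by auto
    ultimately show "a = b" using e by simp
  qed
  have disj2: "R0 \<inter> f ` B = {}" unfolding R0_def B_def by auto
  have cardK: "card K = card R0 + card B + card Dd"
    using Kdec disj1 finR0 by (simp add: card_Un_disjoint)
  have cardfK: "card (f ` K) = card R0 + card B"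
    using fK disj2 finR0 injB by (simp add: card_Un_disjoint card_image)
  have stx: "st x K = B \<union> Dd" unfolding st_def B_def Dd_def by auto
  have cardstx: "card (st x K) = card B + card Dd" using stx disj1 finR0 by (simp add: card_Un_disjoint)
  have "st y K \<subseteq> R0y \<union> Dd"
  proof
    fix \<rho> assume "\<rho> \<in> st y K"
    hence r: "\<rho> \<in> K" "y \<in> \<rho>" unfolding st_def by auto
    show "\<rho> \<in> R0y \<union> Dd"
    proof (cases "x \<in> \<rho>")
      case False thus ?thesis using r unfolding R0y_def R0_def by auto
    next
      case True
      have "f \<rho> = \<rho> - {x}" using fx[OF True] r xy by auto
      moreover have "\<rho> - {x} \<in> K"
      proof -
        have "\<rho> - {x} \<subseteq> \<rho>" "\<rho> - {x} \<noteq> {}" using r xy by auto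
        thus ?thesis using cl r(1) by blast
      qed
      ultimately show ?thesis using True r unfolding Dd_def by auto
    qed
  qed
  hence "card (st y K) \<le> card R0y + card Dd"
    by (metis card_Un_le card_mono finR0(3) finR0(4) finite_UnI le_trans)
  hence BR: "card B \<le> card R0y" using sle cardstx by linarith
  have psiK: "psi k K = sum (gsum k) R0 + sum (gsum k) B + sum (gsum k) Dd"
    unfolding psi_def using Kdec disj1 finR0 by (simp add: sum.union_disjoint)
  have psiK': "psi k' (f ` K) = sum (gsum k') R0 + sum (gsum k' \<circ> f) B"
    unfolding psi_def using fK disj2 finR0 injB by (simp add: sum.union_disjoint sum.reindex)
  have gR0: "gsum k' \<rho> = gsum k \<rho> + (if y \<in> \<rho> then Lv else 0)" if "\<rho> \<in> R0" for \<rho>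
  proof -
    have fr: "finite \<rho>" using that sfin unfolding R0_def by auto
    show ?thesis
    proof (cases "y \<in> \<rho>")
      case False
      hence "gsum k' \<rho> = gsum k \<rho>" unfolding gsum_def k'_def by (intro sum.cong) auto
      thus ?thesis using False by simp
    next
      case True
      have "gsum k' \<rho> = log 2 (real (k' y)) + (\<Sum>w\<in>\<rho>-{y}. log 2 (real (k' w)))"
        unfolding gsum_def using fr True by (simp add: sum.remove)
      also have "(\<Sum>w\<in>\<rho>-{y}. log 2 (real (k' w))) = (\<Sum>w\<in>\<rho>-{y}. log 2 (real (k w)))"
        unfolding k'_def by (intro sum.cong) auto
      also have "gsum k \<rho> = log 2 (real (k y)) + (\<Sum>w\<in>\<rho>-{y}. log 2 (real (k w)))"
        unfolding gsum_def using fr True by (simp add: sum.remove)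
      ultimately show ?thesis using True k'y unfolding Lv_def by simp
    qed
  qed
  have gB: "(gsum k' \<circ> f) \<rho> = gsum k \<rho> + Lu" if "\<rho> \<in> B" for \<rho>
  proof -
    have r: "\<rho> \<in> K" "x \<in> \<rho>" using that unfolding B_def by auto
    have fr: "finite \<rho>" using r sfin by auto
    have ny: "y \<notin> \<rho> - {x}" using Bny[OF that] by auto
    have "(gsum k' \<circ> f) \<rho> = gsum k' (insert y (\<rho> - {x}))" using fx[OF r(2)] by simp
    also have "\<dots> = log 2 (real (k' y)) + (\<Sum>w\<in>\<rho>-{x}. log 2 (real (k' w)))"
      unfolding gsum_def using fr ny by simp
    also have "(\<Sum>w\<in>\<rho>-{x}. log 2 (real (k' w))) = (\<Sum>w\<in>\<rho>-{x}. log 2 (real (k w)))"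
      unfolding k'_def using ny by (intro sum.cong) auto
    also have "gsum k \<rho> = log 2 (real (k x)) + (\<Sum>w\<in>\<rho>-{x}. log 2 (real (k w)))"
      unfolding gsum_def using fr r by (simp add: sum.remove)
    ultimately show ?thesis using k'y unfolding Lu_def by simp
  qed
  have sR0: "sum (gsum k') R0 = sum (gsum k) R0 + Lv * real (card R0y)"
  proof -
    have "sum (gsum k') R0 = sum (\<lambda>\<rho>. gsum k \<rho> + (if y \<in> \<rho> then Lv else 0)) R0"
      using gR0 by (rule sum.cong[OF refl])
    also have "\<dots> = sum (gsum k) R0 + (\<Sum>\<rho>\<in>R0. if y \<in> \<rho> then Lv else 0)"
      by (simp add: sum.distrib)
    also have "(\<Sum>\<rho>\<in>R0. if y \<in> \<rho> then Lv else 0) = (\<Sum>\<rho>\<in>R0y. Lv)"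
      unfolding R0y_def using finR0(1) by (rule sum.inter_filter[symmetric])
    finally show ?thesis by simp
  qed
  have sB: "sum (gsum k' \<circ> f) B = sum (gsum k) B + Lu * real (card B)"
  proof -
    have "sum (gsum k' \<circ> f) B = sum (\<lambda>\<rho>. gsum k \<rho> + Lu) B"
      using gB by (rule sum.cong[OF refl])
    thus ?thesis by (simp add: sum.distrib)
  qed
  have sD: "sum (gsum k) Dd \<le> C * real (card Dd)"
  proof -
    have "sum (gsum k) Dd \<le> sum (\<lambda>_. C) Dd"
      using gC unfolding Dd_def by (intro sum_mono) auto
    thus ?thesis by (simp add: mult.commute)
  qed
  have L2: "2 \<le> Lu + Lv" unfolding Lu_def Lv_def using log_sum_ge2[OF kx ky] by simp
  have Lv0: "0 \<le> Lv" unfolding Lv_def using ky by simp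
  have "Lv * real (card B) \<le> Lv * real (card R0y)" using BR Lv0 by (simp add: mult_left_mono)
  hence "2 * real (card B) \<le> Lu * real (card B) + Lv * real (card R0y)"
  proof -
    have "2 * real (card B) \<le> (Lu + Lv) * real (card B)" using L2 by (simp add: mult_right_mono)
    thus ?thesis using \<open>Lv * real (card B) \<le> Lv * real (card R0y)\<close> by (simp add: distrib_right)
  qed
  thus ?thesis
    using psiK psiK' sR0 sB sD cardK cardfK cardstx unfolding k'_def[symmetric]
    by (simp add: algebra_simps)
qed




lemma log_nat_nonneg: "0 \<le> log 2 (real (N::nat))"
proof (cases "N = 0")
  case True thus ?thesis by (simp add: log_def)
next
  case False thus ?thesis by simp
qed

lemma gsum_nonneg: "(\<forall>w\<in>\<rho>. 1 \<le> k w) \<Longrightarrow> 0 \<le> gsum k \<rho>"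
  unfolding gsum_def by (intro sum_nonneg) auto

lemma gsum_le:
  assumes "finite \<rho>" "\<forall>w\<in>\<rho>. 1 \<le> k w \<and> k w \<le> N" "card \<rho> \<le> D + 1"
  shows "gsum k \<rho> \<le> (real D + 1) * log 2 (real N)"
proof -
  have "gsum k \<rho> \<le> (\<Sum>w\<in>\<rho>. log 2 (real N))"
    unfolding gsum_def
  proof (intro sum_mono)
    fix w assume "w \<in> \<rho>"
    hence "1 \<le> k w" "k w \<le> N" using assms(2) by auto
    thus "log 2 (real (k w)) \<le> log 2 (real N)" by (subst log_le_cancel_iff) auto
  qed
  also have "\<dots> = real (card \<rho>) * log 2 (real N)" by simp
  also have "\<dots> \<le> (real D + 1) * log 2 (real N)"
    using assms(3) log_nat_nonneg[of N] by (intro mult_right_mono) auto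
  finally show ?thesis .
qed

definition invb :: "'a cplx \<Rightarrow> 'a cplx \<Rightarrow> 'a set \<Rightarrow> bool" where
  "invb K H A \<longleftrightarrow> finite K \<and> finite H \<and> finite A \<and> (\<forall>\<rho>\<in>K. finite \<rho> \<and> \<rho> \<noteq> {} \<and> \<rho> \<subseteq> A)
     \<and> (\<forall>\<rho>\<in>K. \<forall>\<tau>. \<tau> \<subseteq> \<rho> \<and> \<tau> \<noteq> {} \<longrightarrow> \<tau> \<in> K) \<and> (\<forall>x\<in>A. {x} \<in> K) \<and> K \<subseteq> H
     \<and> (\<forall>\<tau>\<in>H. \<tau> \<subseteq> A \<longrightarrow> \<tau> \<in> K) \<and> (\<forall>\<tau>\<in>H. \<forall>\<tau>'. \<tau>' \<subseteq> \<tau> \<and> \<tau>' \<noteq> {} \<longrightarrow> \<tau>' \<in> H)"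

lemma invbD:
  assumes "invb K H A"
  shows "finite K" "finite H" "finite A" "\<And>\<rho>. \<rho>\<in>K \<Longrightarrow> finite \<rho>" "\<And>\<rho>. \<rho>\<in>K \<Longrightarrow> \<rho> \<noteq> {}"
    "\<And>\<rho>. \<rho>\<in>K \<Longrightarrow> \<rho> \<subseteq> A"
    "\<And>\<rho> \<tau>. \<rho>\<in>K \<Longrightarrow> \<tau> \<subseteq> \<rho> \<Longrightarrow> \<tau> \<noteq> {} \<Longrightarrow> \<tau> \<in> K"
    "\<And>x. x\<in>A \<Longrightarrow> {x} \<in> K" "K \<subseteq> H" "\<And>\<tau>. \<tau>\<in>H \<Longrightarrow> \<tau> \<subseteq> A \<Longrightarrow> \<tau> \<in> K"
    "\<And>\<rho> \<tau>. \<rho>\<in>H \<Longrightarrow> \<tau> \<subseteq> \<rho> \<Longrightarrow> \<tau> \<noteq> {} \<Longrightarrow> \<tau> \<in> H"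
proof -
  note a = assms[unfolded invb_def]
  from a show "finite K" by (elim conjE)
  from a show "finite H" by (elim conjE)
  from a show "finite A" by (elim conjE)
  from a have b: "\<forall>\<rho>\<in>K. finite \<rho> \<and> \<rho> \<noteq> {} \<and> \<rho> \<subseteq> A" by (elim conjE)
  from b show "\<And>\<rho>. \<rho>\<in>K \<Longrightarrow> finite \<rho>" by blast
  from b show "\<And>\<rho>. \<rho>\<in>K \<Longrightarrow> \<rho> \<noteq> {}" by blast
  from b show "\<And>\<rho>. \<rho>\<in>K \<Longrightarrow> \<rho> \<subseteq> A" by blast
  from a have c: "\<forall>\<rho>\<in>K. \<forall>\<tau>. \<tau> \<subseteq> \<rho> \<and> \<tau> \<noteq> {} \<longrightarrow> \<tau> \<in> K" by (elim conjE)
  from c show "\<And>\<rho> \<tau>. \<rho>\<in>K \<Longrightarrow> \<tau> \<subseteq> \<rho> \<Longrightarrow> \<tau> \<noteq> {} \<Longrightarrow> \<tau> \<in> K" by blast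
  from a have d: "\<forall>x\<in>A. {x} \<in> K" by (elim conjE)
  from d show "\<And>x. x\<in>A \<Longrightarrow> {x} \<in> K" by blast
  from a show "K \<subseteq> H" by (elim conjE)
  from a have e: "\<forall>\<tau>\<in>H. \<tau> \<subseteq> A \<longrightarrow> \<tau> \<in> K" by (elim conjE)
  from e show "\<And>\<tau>. \<tau>\<in>H \<Longrightarrow> \<tau> \<subseteq> A \<Longrightarrow> \<tau> \<in> K" by blast
  from a have f: "\<forall>\<tau>\<in>H. \<forall>\<tau>'. \<tau>' \<subseteq> \<tau> \<and> \<tau>' \<noteq> {} \<longrightarrow> \<tau>' \<in> H" by (elim conjE)
  from f show "\<And>\<rho> \<tau>. \<rho>\<in>H \<Longrightarrow> \<tau> \<subseteq> \<rho> \<Longrightarrow> \<tau> \<noteq> {} \<Longrightarrow> \<tau> \<in> H" by blast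
qed

lemma invbI:
  assumes "finite K" "finite H" "finite A" "\<And>\<rho>. \<rho>\<in>K \<Longrightarrow> finite \<rho>" "\<And>\<rho>. \<rho>\<in>K \<Longrightarrow> \<rho> \<noteq> {}"
    "\<And>\<rho>. \<rho>\<in>K \<Longrightarrow> \<rho> \<subseteq> A"
    "\<And>\<rho> \<tau>. \<rho>\<in>K \<Longrightarrow> \<tau> \<subseteq> \<rho> \<Longrightarrow> \<tau> \<noteq> {} \<Longrightarrow> \<tau> \<in> K"
    "\<And>x. x\<in>A \<Longrightarrow> {x} \<in> K" "K \<subseteq> H" "\<And>\<tau>. \<tau>\<in>H \<Longrightarrow> \<tau> \<subseteq> A \<Longrightarrow> \<tau> \<in> K"
    "\<And>\<rho> \<tau>. \<rho>\<in>H \<Longrightarrow> \<tau> \<subseteq> \<rho> \<Longrightarrow> \<tau> \<noteq> {} \<Longrightarrow> \<tau> \<in> H"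
  shows "invb K H A"
  unfolding invb_def
proof (intro conjI)
  show "finite K" "finite H" "finite A" "K \<subseteq> H" by (rule assms)+
  show "\<forall>\<rho>\<in>K. finite \<rho> \<and> \<rho> \<noteq> {} \<and> \<rho> \<subseteq> A" using assms(4,5,6) by simp
  show "\<forall>\<rho>\<in>K. \<forall>\<tau>. \<tau> \<subseteq> \<rho> \<and> \<tau> \<noteq> {} \<longrightarrow> \<tau> \<in> K" using assms(7) by (intro ballI allI impI) (elim conjE)
  show "\<forall>x\<in>A. {x} \<in> K" using assms(8) by simp
  show "\<forall>\<tau>\<in>H. \<tau> \<subseteq> A \<longrightarrow> \<tau> \<in> K" using assms(10) by simp
  show "\<forall>\<tau>\<in>H. \<forall>\<tau>'. \<tau>' \<subseteq> \<tau> \<and> \<tau>' \<noteq> {} \<longrightarrow> \<tau>' \<in> H" using assms(11) by (intro ballI allI impI) (elim conjE)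
qed

lemma act_star_eq:
  assumes "invb K H A" "w \<in> A"
  shows "act_star w H A = {\<tau>\<in>K. \<exists>\<rho>\<in>K. w \<in> \<rho> \<and> \<tau> \<subseteq> \<rho>}"
proof
  show "act_star w H A \<subseteq> {\<tau>\<in>K. \<exists>\<rho>\<in>K. w \<in> \<rho> \<and> \<tau> \<subseteq> \<rho>}"
  proof
    fix \<tau> assume "\<tau> \<in> act_star w H A"
    then obtain \<rho> where t: "\<tau> \<in> H" "\<tau> \<subseteq> A" "\<rho> \<in> H" "w \<in> \<rho>" "\<tau> \<subseteq> \<rho>"
      unfolding act_star_def by auto
    have tK: "\<tau> \<in> K" using t invbD(10)[OF assms(1)] by auto
    have "insert w \<tau> \<in> H" using t invbD(11)[OF assms(1), of \<rho> "insert w \<tau>"] by auto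
    moreover have "insert w \<tau> \<subseteq> A" using t assms(2) by auto
    ultimately have "insert w \<tau> \<in> K" using invbD(10)[OF assms(1)] by blast
    thus "\<tau> \<in> {\<tau>\<in>K. \<exists>\<rho>\<in>K. w \<in> \<rho> \<and> \<tau> \<subseteq> \<rho>}" using tK by auto
  qed
  show "{\<tau>\<in>K. \<exists>\<rho>\<in>K. w \<in> \<rho> \<and> \<tau> \<subseteq> \<rho>} \<subseteq> act_star w H A"
  proof
    fix \<tau> assume "\<tau> \<in> {\<tau>\<in>K. \<exists>\<rho>\<in>K. w \<in> \<rho> \<and> \<tau> \<subseteq> \<rho>}"
    then obtain \<rho> where r: "\<tau> \<in> K" "\<rho> \<in> K" "w \<in> \<rho>" "\<tau> \<subseteq> \<rho>" by auto
    have "\<tau> \<subseteq> A" using invbD(6)[OF assms(1) r(1)] .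
    moreover have "\<tau> \<in> H" "\<rho> \<in> H" using invbD(9)[OF assms(1)] r(1,2) by (auto simp only: subsetD)
    ultimately show "\<tau> \<in> act_star w H A" using r(3,4) unfolding act_star_def by (simp only: mem_Collect_eq) blast
  qed
qed

lemma card_clst:
  assumes "invb K H A" "w \<in> A"
  shows "card {\<tau>\<in>K. \<exists>\<rho>\<in>K. w \<in> \<rho> \<and> \<tau> \<subseteq> \<rho>} = 2 * card (st w K) - 1"
proof -
  have fin: "finite K" using invbD(1)[OF assms(1)] .
  have cl: "\<And>\<rho> \<tau>. \<rho>\<in>K \<Longrightarrow> \<tau> \<subseteq> \<rho> \<Longrightarrow> \<tau> \<noteq> {} \<Longrightarrow> \<tau> \<in> K" using invbD(7)[OF assms(1)] .
  have ne: "\<And>\<rho>. \<rho>\<in>K \<Longrightarrow> \<rho> \<noteq> {}" using invbD(5)[OF assms(1)] .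
  have wK: "{w} \<in> K" using invbD(8)[OF assms(1) assms(2)] .
  let ?S = "st w K"
  let ?T = "(\<lambda>\<rho>. \<rho> - {w}) ` (?S - {{w}})"
  have eq: "{\<tau>\<in>K. \<exists>\<rho>\<in>K. w \<in> \<rho> \<and> \<tau> \<subseteq> \<rho>} = ?S \<union> ?T"
  proof
    show "{\<tau>\<in>K. \<exists>\<rho>\<in>K. w \<in> \<rho> \<and> \<tau> \<subseteq> \<rho>} \<subseteq> ?S \<union> ?T"
    proof
      fix \<tau> assume "\<tau> \<in> {\<tau>\<in>K. \<exists>\<rho>\<in>K. w \<in> \<rho> \<and> \<tau> \<subseteq> \<rho>}"
      then obtain \<rho> where t: "\<tau> \<in> K" "\<rho> \<in> K" "w \<in> \<rho>" "\<tau> \<subseteq> \<rho>" by auto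
      show "\<tau> \<in> ?S \<union> ?T"
      proof (cases "w \<in> \<tau>")
        case True thus ?thesis using t unfolding st_def by auto
      next
        case False
        have "insert w \<tau> \<in> K" using cl[of \<rho> "insert w \<tau>"] t by simp
        moreover have "insert w \<tau> \<noteq> {w}" using False ne t(1) by auto
        moreover have "\<tau> = insert w \<tau> - {w}" using False by auto
        ultimately show ?thesis unfolding st_def by blast
      qed
    qed
    show "?S \<union> ?T \<subseteq> {\<tau>\<in>K. \<exists>\<rho>\<in>K. w \<in> \<rho> \<and> \<tau> \<subseteq> \<rho>}"
    proof
      fix \<tau> assume "\<tau> \<in> ?S \<union> ?T"
      thus "\<tau> \<in> {\<tau>\<in>K. \<exists>\<rho>\<in>K. w \<in> \<rho> \<and> \<tau> \<subseteq> \<rho>}"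
      proof
        assume "\<tau> \<in> ?S" thus ?thesis unfolding st_def by auto
      next
        assume "\<tau> \<in> ?T"
        then obtain \<rho> where r: "\<rho> \<in> K" "w \<in> \<rho>" "\<rho> \<noteq> {w}" "\<tau> = \<rho> - {w}" unfolding st_def by auto
        have "\<tau> \<noteq> {}" using r by auto
        hence "\<tau> \<in> K" using cl[of \<rho> \<tau>] r by auto
        thus ?thesis using r by auto
      qed
    qed
  qed
  have finS: "finite ?S" using fin unfolding st_def by auto
  have disj: "?S \<inter> ?T = {}" unfolding st_def by auto
  have inj: "inj_on (\<lambda>\<rho>. \<rho> - {w}) (?S - {{w}})"
  proof (rule inj_onI)
    fix a b assume "a \<in> ?S - {{w}}" "b \<in> ?S - {{w}}" "a - {w} = b - {w}"
    thus "a = b" unfolding st_def by (metis (no_types, lifting) insert_Diff mem_Collect_eq DiffD1)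
  qed
  have wS: "{w} \<in> ?S" using wK unfolding st_def by auto
  have "card ?T = card ?S - 1" using inj finS wS by (simp add: card_image)
  moreover have "card ?S \<ge> 1" using wS finS by (metis card_0_eq empty_iff less_one not_le)
  ultimately have "card (?S \<union> ?T) = 2 * card ?S - 1"
    using disj finS by (simp add: card_Un_disjoint)
  thus ?thesis using eq by simp
qed




lemma invb_init: "invb {} {} {}"
  by (rule invbI) auto

lemma invb_incl:
  assumes I: "invb K H A" and sf: "finite \<sigma>" "\<sigma> \<noteq> {}" "\<sigma> \<notin> K"
    and faces: "\<And>\<tau>. \<tau> \<subset> \<sigma> \<Longrightarrow> \<tau> \<noteq> {} \<Longrightarrow> \<tau> \<in> K"
    and fresh: "card \<sigma> = 1 \<Longrightarrow> (\<forall>\<tau>\<in>H. \<sigma> \<inter> \<tau> = {})"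
  shows "invb (insert \<sigma> K) (insert \<sigma> H) (if card \<sigma> = 1 then A \<union> \<sigma> else A)"
    and "card \<sigma> \<noteq> 1 \<Longrightarrow> \<sigma> \<subseteq> A"
    and "card \<sigma> = 1 \<Longrightarrow> \<sigma> \<inter> A = {}"
proof -
  let ?A = "if card \<sigma> = 1 then A \<union> \<sigma> else A"
  show sA: "card \<sigma> \<noteq> 1 \<Longrightarrow> \<sigma> \<subseteq> A"
  proof
    fix z assume c: "card \<sigma> \<noteq> 1" and z: "z \<in> \<sigma>"
    have "{z} \<noteq> \<sigma>" using c by auto
    hence "{z} \<subset> \<sigma>" using z by auto
    hence "{z} \<in> K" using faces by auto
    thus "z \<in> A" using invbD(6)[OF I] by auto
  qed
  show sA1: "card \<sigma> = 1 \<Longrightarrow> \<sigma> \<inter> A = {}"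
  proof -
    assume c: "card \<sigma> = 1"
    then obtain x where x: "\<sigma> = {x}" by (auto simp: card_Suc_eq)
    have "x \<notin> A" using invbD(8)[OF I, of x] sf(3) x by auto
    thus ?thesis using x by auto
  qed
  show "invb (insert \<sigma> K) (insert \<sigma> H) ?A"
  proof (rule invbI)
    show "finite (insert \<sigma> K)" "finite (insert \<sigma> H)" using invbD(1,2)[OF I] by auto
    show "finite ?A" using invbD(3)[OF I] sf(1) by auto
    show "\<And>\<rho>. \<rho> \<in> insert \<sigma> K \<Longrightarrow> finite \<rho>" using invbD(4)[OF I] sf(1) by auto
    show "\<And>\<rho>. \<rho> \<in> insert \<sigma> K \<Longrightarrow> \<rho> \<noteq> {}" using invbD(5)[OF I] sf(2) by auto
    show "\<And>\<rho>. \<rho> \<in> insert \<sigma> K \<Longrightarrow> \<rho> \<subseteq> ?A"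
    proof -
      fix \<rho> assume "\<rho> \<in> insert \<sigma> K"
      thus "\<rho> \<subseteq> ?A"
      proof
        assume "\<rho> = \<sigma>" thus ?thesis using sA by auto
      next
        assume "\<rho> \<in> K" thus ?thesis using invbD(6)[OF I] by auto
      qed
    qed
    show "\<And>\<rho> \<tau>. \<rho> \<in> insert \<sigma> K \<Longrightarrow> \<tau> \<subseteq> \<rho> \<Longrightarrow> \<tau> \<noteq> {} \<Longrightarrow> \<tau> \<in> insert \<sigma> K"
    proof -
      fix \<rho> \<tau> assume r: "\<rho> \<in> insert \<sigma> K" "\<tau> \<subseteq> \<rho>" "\<tau> \<noteq> {}"
      show "\<tau> \<in> insert \<sigma> K"
      proof (cases "\<rho> = \<sigma>")
        case True
        show ?thesis
        proof (cases "\<tau> = \<sigma>")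
          case True thus ?thesis by simp
        next
          case False
          hence "\<tau> \<subset> \<sigma>" using r(2) \<open>\<rho> = \<sigma>\<close> by auto
          thus ?thesis using faces r(3) by simp
        qed
      next
        case False
        hence "\<rho> \<in> K" using r(1) by simp
        thus ?thesis using invbD(7)[OF I] r(2,3) by simp
      qed
    qed
    show "\<And>x. x \<in> ?A \<Longrightarrow> {x} \<in> insert \<sigma> K"
    proof -
      fix x assume x: "x \<in> ?A"
      show "{x} \<in> insert \<sigma> K"
      proof (cases "x \<in> A")
        case True thus ?thesis using invbD(8)[OF I] by simp
      next
        case False
        hence c: "card \<sigma> = 1" "x \<in> \<sigma>" using x by (auto split: if_splits)
        then obtain y where "\<sigma> = {y}" by (auto simp: card_Suc_eq)
        thus ?thesis using c by simp
      qed
    qed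
    show "insert \<sigma> K \<subseteq> insert \<sigma> H" using invbD(9)[OF I] by auto
    show "\<And>\<tau>. \<tau> \<in> insert \<sigma> H \<Longrightarrow> \<tau> \<subseteq> ?A \<Longrightarrow> \<tau> \<in> insert \<sigma> K"
    proof -
      fix \<tau> assume t: "\<tau> \<in> insert \<sigma> H" "\<tau> \<subseteq> ?A"
      show "\<tau> \<in> insert \<sigma> K"
      proof (cases "\<tau> = \<sigma>")
        case True thus ?thesis by simp
      next
        case False
        hence tH: "\<tau> \<in> H" using t(1) by simp
        have "\<tau> \<subseteq> A"
        proof (cases "card \<sigma> = 1")
          case True
          hence "\<sigma> \<inter> \<tau> = {}" using fresh tH by auto
          thus ?thesis using t(2) True by auto
        next
          case False thus ?thesis using t(2) by simp
        qed
        thus ?thesis using invbD(10)[OF I tH] by simp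
      qed
    qed
    show "\<And>\<rho> \<tau>. \<rho> \<in> insert \<sigma> H \<Longrightarrow> \<tau> \<subseteq> \<rho> \<Longrightarrow> \<tau> \<noteq> {} \<Longrightarrow> \<tau> \<in> insert \<sigma> H"
    proof -
      fix \<rho> \<tau> assume r: "\<rho> \<in> insert \<sigma> H" "\<tau> \<subseteq> \<rho>" "\<tau> \<noteq> {}"
      show "\<tau> \<in> insert \<sigma> H"
      proof (cases "\<rho> = \<sigma>")
        case True
        show ?thesis
        proof (cases "\<tau> = \<sigma>")
          case True thus ?thesis by simp
        next
          case False
          hence "\<tau> \<subset> \<sigma>" using r(2) \<open>\<rho> = \<sigma>\<close> by auto
          hence "\<tau> \<in> K" using faces r(3) by simp
          thus ?thesis using invbD(9)[OF I] by auto
        qed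
      next
        case False
        hence "\<rho> \<in> H" using r(1) by simp
        thus ?thesis using invbD(11)[OF I] r(2,3) by simp
      qed
    qed
  qed
qed




lemma image_preimage_sub: "\<tau> \<subseteq> h ` \<rho> \<Longrightarrow> h ` (\<rho> \<inter> h -` \<tau>) = \<tau>"
  by auto

lemma invb_merge:
  assumes I: "invb K H A" and xy: "x \<noteq> y" and xK: "{x} \<in> K" and yK: "{y} \<in> K"
  shows "invb (contract_cplx x y K) (H \<union> cone y (act_star x H A)) (A - {x})"
proof -
  define h where "h = (\<lambda>z. if z = x then y else z)"
  define f where "f = (\<lambda>\<rho>. h ` \<rho>)"
  have cc: "contract_cplx x y K = f ` K" unfolding contract_cplx_def f_def h_def by simp
  define S where "S = act_star x H A"
  have fx: "f \<rho> = insert y (\<rho> - {x})" if "x \<in> \<rho>" for \<rho>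
    using that unfolding f_def h_def by auto
  have fnx: "f \<rho> = \<rho>" if "x \<notin> \<rho>" for \<rho>
    using that unfolding f_def h_def by auto
  have xA: "x \<in> A" and yA: "y \<in> A" using invbD(6)[OF I xK] invbD(6)[OF I yK] by auto
  have KH: "\<And>\<rho>. \<rho> \<in> K \<Longrightarrow> \<rho> \<in> H" using invbD(9)[OF I] by auto
  have Ssub: "\<And>\<tau>. \<tau> \<in> S \<Longrightarrow> \<tau> \<in> H \<and> \<tau> \<subseteq> A \<and> (\<exists>\<rho>\<in>H. x \<in> \<rho> \<and> \<tau> \<subseteq> \<rho>)"
    unfolding S_def act_star_def by simp
  have cone_mem: "\<And>\<tau>. \<tau> \<in> cone y S \<longleftrightarrow> (\<exists>\<tau>0. \<tau> = insert y \<tau>0 \<and> \<tau>0 \<in> S)"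
    unfolding cone_def by auto
  show ?thesis unfolding cc S_def[symmetric]
  proof (rule invbI)
    show "finite (f ` K)" using invbD(1)[OF I] by simp
    have "finite S" using invbD(2)[OF I] Ssub by (metis finite_subset subsetI)
    hence "finite (cone y S)" unfolding cone_def by simp
    thus "finite (H \<union> cone y S)" using invbD(2)[OF I] by simp
    show "finite (A - {x})" using invbD(3)[OF I] by simp
    show "\<And>\<rho>. \<rho> \<in> f ` K \<Longrightarrow> finite \<rho>" using invbD(4)[OF I] unfolding f_def by auto
    show "\<And>\<rho>. \<rho> \<in> f ` K \<Longrightarrow> \<rho> \<noteq> {}" using invbD(5)[OF I] unfolding f_def by auto
    show "\<And>\<rho>. \<rho> \<in> f ` K \<Longrightarrow> \<rho> \<subseteq> A - {x}"
    proof -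
      fix \<rho>' assume "\<rho>' \<in> f ` K"
      then obtain \<rho> where r: "\<rho> \<in> K" "\<rho>' = f \<rho>" by auto
      have "\<rho> \<subseteq> A" using invbD(6)[OF I r(1)] .
      thus "\<rho>' \<subseteq> A - {x}" using r(2) yA xy unfolding f_def h_def by auto
    qed
    show "\<And>\<rho> \<tau>. \<rho> \<in> f ` K \<Longrightarrow> \<tau> \<subseteq> \<rho> \<Longrightarrow> \<tau> \<noteq> {} \<Longrightarrow> \<tau> \<in> f ` K"
    proof -
      fix \<rho>' \<tau> assume a: "\<rho>' \<in> f ` K" "\<tau> \<subseteq> \<rho>'" "\<tau> \<noteq> {}"
      then obtain \<rho> where r: "\<rho> \<in> K" "\<rho>' = f \<rho>" by auto
      have ts: "\<tau> \<subseteq> h ` \<rho>" using a(2) r(2) unfolding f_def by simp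
      define \<tau>' where "\<tau>' = \<rho> \<inter> h -` \<tau>"
      have e: "f \<tau>' = \<tau>" unfolding f_def \<tau>'_def using image_preimage_sub[OF ts] .
      have "\<tau>' \<noteq> {}" using e a(3) unfolding f_def by auto
      moreover have "\<tau>' \<subseteq> \<rho>" unfolding \<tau>'_def by auto
      ultimately have "\<tau>' \<in> K" using invbD(7)[OF I r(1)] by simp
      thus "\<tau> \<in> f ` K" using e by (metis image_eqI)
    qed
    show "\<And>z. z \<in> A - {x} \<Longrightarrow> {z} \<in> f ` K"
    proof -
      fix z assume z: "z \<in> A - {x}"
      have "{z} \<in> K" using invbD(8)[OF I] z by simp
      moreover have "f {z} = {z}" using fnx[of "{z}"] z by auto
      ultimately show "{z} \<in> f ` K" by (metis image_eqI)
    qed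
    show "f ` K \<subseteq> H \<union> cone y S"
    proof
      fix \<rho>' assume "\<rho>' \<in> f ` K"
      then obtain \<rho> where r: "\<rho> \<in> K" "\<rho>' = f \<rho>" by auto
      show "\<rho>' \<in> H \<union> cone y S"
      proof (cases "x \<in> \<rho>")
        case False thus ?thesis using r fnx KH by simp
      next
        case True
        show ?thesis
        proof (cases "\<rho> - {x} = {}")
          case True
          hence "\<rho>' = {y}" using r(2) fx \<open>x \<in> \<rho>\<close> by auto
          thus ?thesis using KH[OF yK] by simp
        next
          case False
          have tK: "\<rho> - {x} \<in> K" using invbD(7)[OF I r(1)] False by auto
          have "\<rho> - {x} \<in> S" unfolding S_def act_star_def
            using KH[OF tK] KH[OF r(1)] invbD(6)[OF I tK] \<open>x \<in> \<rho>\<close> by auto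
          hence "\<rho>' \<in> cone y S" using r(2) fx[OF \<open>x \<in> \<rho>\<close>] cone_mem by auto
          thus ?thesis by simp
        qed
      qed
    qed
    show "\<And>\<tau>. \<tau> \<in> H \<union> cone y S \<Longrightarrow> \<tau> \<subseteq> A - {x} \<Longrightarrow> \<tau> \<in> f ` K"
    proof -
      fix \<tau> assume t: "\<tau> \<in> H \<union> cone y S" "\<tau> \<subseteq> A - {x}"
      show "\<tau> \<in> f ` K"
      proof (cases "\<tau> \<in> H")
        case True
        hence "\<tau> \<in> K" using invbD(10)[OF I] t(2) by auto
        moreover have "f \<tau> = \<tau>" using fnx t(2) by auto
        ultimately show ?thesis by (metis image_eqI)
      next
        case False
        then obtain \<tau>0 where t0: "\<tau> = insert y \<tau>0" "\<tau>0 \<in> S" using t(1) cone_mem by auto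
        obtain \<rho> where r: "\<tau>0 \<in> H" "\<tau>0 \<subseteq> A" "\<rho> \<in> H" "x \<in> \<rho>" "\<tau>0 \<subseteq> \<rho>" using Ssub[OF t0(2)] by auto
        have xt: "x \<notin> \<tau>0" using t(2) t0(1) by auto
        have "insert x \<tau>0 \<in> H" using invbD(11)[OF I r(3)] r(4,5) by simp
        moreover have "insert x \<tau>0 \<subseteq> A" using r(2) xA by simp
        ultimately have iK: "insert x \<tau>0 \<in> K" using invbD(10)[OF I] by simp
        have "f (insert x \<tau>0) = insert y \<tau>0" using fx[of "insert x \<tau>0"] xt by simp
        thus ?thesis using iK t0(1) by (metis image_eqI)
      qed
    qed
    show "\<And>\<rho> \<tau>. \<rho> \<in> H \<union> cone y S \<Longrightarrow> \<tau> \<subseteq> \<rho> \<Longrightarrow> \<tau> \<noteq> {} \<Longrightarrow> \<tau> \<in> H \<union> cone y S"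
    proof -
      fix \<rho> \<tau> assume a: "\<rho> \<in> H \<union> cone y S" "\<tau> \<subseteq> \<rho>" "\<tau> \<noteq> {}"
      show "\<tau> \<in> H \<union> cone y S"
      proof (cases "\<rho> \<in> H")
        case True thus ?thesis using invbD(11)[OF I] a(2,3) by simp
      next
        case False
        then obtain \<tau>0 where t0: "\<rho> = insert y \<tau>0" "\<tau>0 \<in> S" using a(1) cone_mem by auto
        obtain \<rho>1 where r: "\<tau>0 \<in> H" "\<tau>0 \<subseteq> A" "\<rho>1 \<in> H" "x \<in> \<rho>1" "\<tau>0 \<subseteq> \<rho>1" using Ssub[OF t0(2)] by auto
        show ?thesis
        proof (cases "y \<in> \<tau>")
          case False
          hence "\<tau> \<subseteq> \<tau>0" using a(2) t0(1) by auto
          thus ?thesis using invbD(11)[OF I r(1)] a(3) by simp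
        next
          case True
          show ?thesis
          proof (cases "\<tau> - {y} = {}")
            case True
            hence "\<tau> = {y}" using \<open>y \<in> \<tau>\<close> by auto
            thus ?thesis using KH[OF yK] by simp
          next
            case False
            have sub: "\<tau> - {y} \<subseteq> \<tau>0" using a(2) t0(1) by auto
            have "\<tau> - {y} \<in> H" using invbD(11)[OF I r(1) sub] False by simp
            moreover have "\<tau> - {y} \<subseteq> A" using sub r(2) by auto
            moreover have "\<tau> - {y} \<subseteq> \<rho>1" using sub r(5) by auto
            ultimately have "\<tau> - {y} \<in> S" unfolding S_def act_star_def using r(3,4) by auto
            moreover have "\<tau> = insert y (\<tau> - {y})" using \<open>y \<in> \<tau>\<close> by auto
            ultimately show ?thesis using cone_mem by (metis UnI2)
          qed
        qed
      qed
    qed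
  qed
qed




lemma merge_num:
  assumes I: "invb K H A" and xy: "x \<noteq> y" and xK: "{x} \<in> K" and yK: "{y} \<in> K"
    and c: "card (act_star x H A) \<le> card (act_star y H A)"
    and kpos: "\<forall>z\<in>A. 1 \<le> k z" and gC: "\<forall>\<rho>\<in>K. gsum k \<rho> \<le> C"
  shows "real (card (H \<union> cone y (act_star x H A))) + (2 + C) * real (card (contract_cplx x y K))
           - psi (k(y := k x + k y)) (contract_cplx x y K)
         \<le> real (card H) + (2 + C) * real (card K) - psi k K"
proof -
  have xA: "x \<in> A" and yA: "y \<in> A" using invbD(6)[OF I xK] invbD(6)[OF I yK] by auto
  have cx: "card (act_star x H A) = 2 * card (st x K) - 1"
    using act_star_eq[OF I xA] card_clst[OF I xA] by simp
  have cy: "card (act_star y H A) = 2 * card (st y K) - 1"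
    using act_star_eq[OF I yA] card_clst[OF I yA] by simp
  have finK: "finite K" using invbD(1)[OF I] .
  have sx1: "1 \<le> card (st x K)"
  proof -
    have "{x} \<in> st x K" using xK unfolding st_def by simp
    moreover have "finite (st x K)" using finK unfolding st_def by simp
    ultimately show ?thesis by (metis card_0_eq empty_iff less_one not_le)
  qed
  have sle: "card (st x K) \<le> card (st y K)" using c cx cy sx1 by linarith
  define f where "f = (\<lambda>\<rho>. (\<lambda>z. if z = x then y else z) ` \<rho>)"
  have cc: "contract_cplx x y K = f ` K" unfolding contract_cplx_def f_def by simp
  have MP: "2 * real (card (st x K)) \<le> psi (k(y := k x + k y)) (f ` K) - psi k K
           + (C + 2) * (real (card K) - real (card (f ` K)))"
    unfolding f_def
  proof (rule merge_potential)
    show "finite K" by (rule finK)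
    show "\<forall>\<rho>\<in>K. finite \<rho> \<and> \<rho> \<noteq> {}" using invbD(4,5)[OF I] by simp
    show "\<forall>\<rho>\<in>K. \<forall>\<tau>. \<tau> \<subseteq> \<rho> \<and> \<tau> \<noteq> {} \<longrightarrow> \<tau> \<in> K" using invbD(7)[OF I] by simp
    show "x \<noteq> y" by (rule xy)
    show "1 \<le> k x" "1 \<le> k y" using kpos xA yA by auto
    show "\<forall>\<rho>\<in>K. gsum k \<rho> \<le> C" by (rule gC)
    show "card (st x K) \<le> card (st y K)" by (rule sle)
  qed
  have finS: "finite (act_star x H A)" using invbD(2)[OF I] unfolding act_star_def by simp
  have "card (H \<union> cone y (act_star x H A)) \<le> card H + card (cone y (act_star x H A))"
    by (rule card_Un_le)
  moreover have "card (cone y (act_star x H A)) \<le> card (act_star x H A)"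
  proof -
    have "cone y (act_star x H A) = insert y ` act_star x H A" unfolding cone_def by auto
    thus ?thesis using card_image_le[OF finS] by simp
  qed
  ultimately have "card (H \<union> cone y (act_star x H A)) \<le> card H + (2 * card (st x K) - 1)"
    using cx by linarith
  hence "real (card (H \<union> cone y (act_star x H A))) \<le> real (card H) + 2 * real (card (st x K))"
    using sx1 by linarith
  thus ?thesis using MP unfolding cc by (simp add: algebra_simps)
qed

lemma sum_merge:
  assumes "finite A" "x \<in> A" "y \<in> A" "x \<noteq> y"
  shows "sum (k(y := k x + k y)) (A - {x}) = sum k A"
proof -
  have "sum k A = k x + sum k (A - {x})" using assms by (simp add: sum.remove)
  moreover have "sum k (A - {x}) = k y + sum k (A - {x} - {y})" using assms by (simp add: sum.remove)
  moreover have "sum (k(y := k x + k y)) (A - {x}) = (k(y := k x + k y)) y + sum (k(y := k x + k y)) (A - {x} - {y})"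
    using assms by (intro sum.remove) auto
  moreover have "sum (k(y := k x + k y)) (A - {x} - {y}) = sum k (A - {x} - {y})"
    by (intro sum.cong) auto
  ultimately show ?thesis by (simp add: add.assoc)
qed

fun kupd :: "'a cplx \<times> 'a cplx \<times> 'a set \<Rightarrow> ('a \<Rightarrow> nat) \<Rightarrow> 'a elem_op \<Rightarrow> ('a \<Rightarrow> nat)" where
  "kupd (K, H, A) k (Incl \<sigma>) = (if card \<sigma> = 1 then (\<lambda>z. if z \<in> \<sigma> then 1 else k z) else k)"
| "kupd (K, H, A) k (Contr u v) =
     (if card (act_star u H A) \<le> card (act_star v H A) then k(v := k u + k v) else k(u := k u + k v))"

definition astep :: "('a cplx \<times> 'a cplx \<times> 'a set) \<times> ('a \<Rightarrow> nat) \<Rightarrow> 'a elem_op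
    \<Rightarrow> ('a cplx \<times> 'a cplx \<times> 'a set) \<times> ('a \<Rightarrow> nat)" where
  "astep p f = (step (fst p) f, kupd (fst p) (snd p) f)"

lemma fst_fold_astep: "fst (foldl astep p xs) = foldl step (fst p) xs"
  by (induction xs arbitrary: p) (simp_all add: astep_def)

lemma states_from_nth: "i \<le> length fs \<Longrightarrow> states_from s fs ! i = foldl step s (take i fs)"
proof (induction fs arbitrary: s i)
  case Nil thus ?case by simp
next
  case (Cons f fs)
  show ?case
  proof (cases i)
    case 0 thus ?thesis by simp
  next
    case (Suc j) thus ?thesis using Cons by simp
  qed
qed

lemma length_states_from: "length (states_from s fs) = Suc (length fs)"
  by (induction fs arbitrary: s) auto

lemma step_finite: "finite (fst s) \<Longrightarrow> finite (fst (step s f))"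
proof -
  assume a: "finite (fst s)"
  obtain K H A where s: "s = (K, H, A)" by (cases s) auto
  show ?thesis using a unfolding s by (cases f) (auto simp: contract_cplx_def)
qed




theorem proposition12:
  fixes fs :: "'a elem_op list"
  assumes "valid_tower fs"
  shows "real (card (hat_last fs))
           \<le> real (num_incl fs) + 2 * (real (tower_dim fs) + 1) * real (num_incl fs)
               * (1 + log 2 (real (num_vincl fs)))"
proof -
  define st0 :: "'a cplx \<times> 'a cplx \<times> 'a set" where "st0 = ({}, {}, {})"
  define init :: "('a cplx \<times> 'a cplx \<times> 'a set) \<times> ('a \<Rightarrow> nat)" where "init = (st0, \<lambda>_. 0)"
  define kk where "kk i = snd (foldl astep init (take i fs))" for i
  define N where "N = num_vincl fs"
  define D where "D = tower_dim fs"
  define C where "C = (real D + 1) * log 2 (real N)"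
  define isI :: "'a elem_op \<Rightarrow> bool" where "isI = (\<lambda>f. case f of Incl _ \<Rightarrow> True | _ \<Rightarrow> False)"
  define isV :: "'a elem_op \<Rightarrow> bool" where "isV = (\<lambda>f. case f of Incl \<sigma> \<Rightarrow> card \<sigma> = 1 | _ \<Rightarrow> False)"
  have stn: "states fs ! i = foldl step st0 (take i fs)" if "i \<le> length fs" for i
    unfolding states_def st0_def using states_from_nth[OF that] by simp
  have st_kk: "fst (foldl astep init (take i fs)) = states fs ! i" if "i \<le> length fs" for i
  proof -
    have "fst (foldl astep init (take i fs)) = foldl step (fst init) (take i fs)"
      by (rule fst_fold_astep)
    thus ?thesis using stn[OF that] unfolding init_def by simp
  qed
  have succ: "states fs ! Suc i = step (states fs ! i) (fs ! i)" if "i < length fs" for i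
    using stn[of "Suc i"] stn[of i] that by (simp add: take_Suc_conv_app_nth)
  have ksucc: "kk (Suc i) = kupd (states fs ! i) (kk i) (fs ! i)" if "i < length fs" for i
  proof -
    have "kk (Suc i) = snd (astep (foldl astep init (take i fs)) (fs ! i))"
      unfolding kk_def using that by (simp add: take_Suc_conv_app_nth)
    thus ?thesis using st_kk[of i] that unfolding astep_def kk_def by simp
  qed
  have tc: "tcplx fs i = fst (states fs ! i)" for i unfolding tcplx_def by simp
  have fin_tc: "finite (tcplx fs i)" if "i \<le> length fs" for i
    using that
  proof (induction i)
    case 0 thus ?case using stn[of 0] unfolding tc st0_def by simp
  next
    case (Suc i)
    hence "finite (fst (states fs ! i))" using tc by simp
    thus ?case using succ[of i] Suc.prems step_finite unfolding tc by simp
  qed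
  have dimb: "card \<rho> \<le> D + 1" if "i \<le> length fs" "\<rho> \<in> tcplx fs i" for i \<rho>
  proof -
    let ?S = "{card \<sigma> - 1 | \<sigma> i. i \<le> length fs \<and> \<sigma> \<in> tcplx fs i}"
    have "?S \<subseteq> (\<Union>i\<in>{..length fs}. (\<lambda>\<sigma>. card \<sigma> - 1) ` tcplx fs i)" by auto
    moreover have "finite (\<Union>i\<in>{..length fs}. (\<lambda>\<sigma>. card \<sigma> - 1) ` tcplx fs i)"
      using fin_tc by auto
    ultimately have "finite ?S" by (rule finite_subset)
    moreover have "card \<rho> - 1 \<in> ?S" using that by auto
    ultimately have "card \<rho> - 1 \<le> Max (insert 0 ?S)" by simp
    thus ?thesis unfolding D_def tower_dim_def by simp
  qed
  have nI: "num_incl (take (Suc i) fs) = num_incl (take i fs) + (if isI (fs ! i) then 1 else 0)"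
    if "i < length fs" for i
    using that unfolding num_incl_def isI_def by (simp add: take_Suc_conv_app_nth)
  have nV: "num_vincl (take (Suc i) fs) = num_vincl (take i fs) + (if isV (fs ! i) then 1 else 0)"
    if "i < length fs" for i
    using that unfolding num_vincl_def isV_def by (cases "fs ! i") (simp_all add: take_Suc_conv_app_nth)
  have nVle: "num_vincl (take i fs) \<le> N" for i
    unfolding N_def num_vincl_def
    by (metis append_take_drop_id filter_append length_append le_add1)
  have C0: "0 \<le> C" unfolding C_def using log_nat_nonneg[of N] by simp
  define P where "P i \<longleftrightarrow> (case states fs ! i of (K, H, A) \<Rightarrow>
      invb K H A \<and> (\<forall>\<tau>\<in>H. \<forall>y\<in>\<tau>. \<exists>j\<le>i. {y} \<in> tcplx fs j) \<and> (\<forall>x\<in>A. 1 \<le> kk i x)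
      \<and> sum (kk i) A = num_vincl (take i fs)
      \<and> real (card H) + (2 + C) * real (card K) - psi (kk i) K \<le> real (num_incl (take i fs)) * (3 + C))"
    for i
  have gC: "\<forall>\<rho>\<in>K. gsum (kk i) \<rho> \<le> C"
    if "i \<le> length fs" "states fs ! i = (K, H, A)" "invb K H A" "\<forall>x\<in>A. 1 \<le> kk i x"
       "sum (kk i) A = num_vincl (take i fs)" for i K H A
  proof
    fix \<rho> assume r: "\<rho> \<in> K"
    have "gsum (kk i) \<rho> \<le> (real D + 1) * log 2 (real N)"
    proof (rule gsum_le)
      show "finite \<rho>" using invbD(4)[OF that(3) r] .
      show "card \<rho> \<le> D + 1" using dimb[OF that(1)] r that(2) unfolding tc by simp
      show "\<forall>w\<in>\<rho>. 1 \<le> kk i w \<and> kk i w \<le> N"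
      proof
        fix w assume "w \<in> \<rho>"
        hence wA: "w \<in> A" using invbD(6)[OF that(3) r] by auto
        have "kk i w \<le> sum (kk i) A" by (rule member_le_sum[OF wA]) (auto simp: invbD(3)[OF that(3)])
        thus "1 \<le> kk i w \<and> kk i w \<le> N" using that(4,5) wA nVle[of i] by auto
      qed
    qed
    thus "gsum (kk i) \<rho> \<le> C" unfolding C_def .
  qed
  have Pall: "P i" if "i \<le> length fs" for i
    using that
  proof (induction i)
    case 0
    have "states fs ! 0 = ({}, {}, {})" using stn[of 0] unfolding st0_def by simp
    thus ?case unfolding P_def using invb_init by (simp add: psi_def num_incl_def num_vincl_def)
  next
    case (Suc i)
    hence il: "i < length fs" by simp
    have Pi: "P i" using Suc by simp
    obtain K H A where sK: "states fs ! i = (K, H, A)" by (cases "states fs ! i") auto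
    define k where "k = kk i"
    have tci: "tcplx fs i = K" using sK tc by simp
    have I: "invb K H A" and hist: "\<forall>\<tau>\<in>H. \<forall>y\<in>\<tau>. \<exists>j\<le>i. {y} \<in> tcplx fs j"
      and kp: "\<forall>x\<in>A. 1 \<le> k x" and ks: "sum k A = num_vincl (take i fs)"
      and MI: "real (card H) + (2 + C) * real (card K) - psi k K \<le> real (num_incl (take i fs)) * (3 + C)"
      using Pi sK unfolding P_def k_def by auto
    have gCi: "\<forall>\<rho>\<in>K. gsum k \<rho> \<le> C" using gC[OF _ sK I] il kp ks unfolding k_def by simp
    have val: "case fs ! i of
        Incl \<sigma> \<Rightarrow> finite \<sigma> \<and> \<sigma> \<noteq> {} \<and> \<sigma> \<notin> tcplx fs i
                 \<and> (\<forall>\<tau>. \<tau> \<subset> \<sigma> \<and> \<tau> \<noteq> {} \<longrightarrow> \<tau> \<in> tcplx fs i)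
                 \<and> (card \<sigma> = 1 \<longrightarrow> (\<forall>j \<le> i. \<sigma> \<notin> tcplx fs j))
      | Contr u v \<Rightarrow> u \<noteq> v \<and> {u} \<in> tcplx fs i \<and> {v} \<in> tcplx fs i"
      using assms il unfolding valid_tower_def by auto
    show ?case
    proof (cases "fs ! i")
      case (Incl \<sigma>)
      have sf: "finite \<sigma>" "\<sigma> \<noteq> {}" "\<sigma> \<notin> K" and faces: "\<And>\<tau>. \<tau> \<subset> \<sigma> \<Longrightarrow> \<tau> \<noteq> {} \<Longrightarrow> \<tau> \<in> K"
        and new: "card \<sigma> = 1 \<Longrightarrow> (\<forall>j \<le> i. \<sigma> \<notin> tcplx fs j)"
        using val Incl tci by auto
      have fresh: "\<forall>\<tau>\<in>H. \<sigma> \<inter> \<tau> = {}" if c1: "card \<sigma> = 1"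
      proof (rule ccontr)
        assume "\<not> (\<forall>\<tau>\<in>H. \<sigma> \<inter> \<tau> = {})"
        then obtain \<tau> z where z: "\<tau> \<in> H" "z \<in> \<sigma>" "z \<in> \<tau>" by auto
        obtain j where j: "j \<le> i" "{z} \<in> tcplx fs j" using hist z(1,3) by blast
        have "\<sigma> = {z}" using c1 z(2) by (auto simp: card_Suc_eq)
        thus False using new[OF c1] j by auto
      qed
      define A' where "A' = (if card \<sigma> = 1 then A \<union> \<sigma> else A)"
      define k' where "k' = (if card \<sigma> = 1 then (\<lambda>z. if z \<in> \<sigma> then 1 else k z) else k)"
      have s1: "states fs ! Suc i = (insert \<sigma> K, insert \<sigma> H, A')"
        using succ[OF il] sK Incl unfolding A'_def by simp
      have k1: "kk (Suc i) = k'" using ksucc[OF il] sK Incl unfolding k'_def k_def by simp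
      have I': "invb (insert \<sigma> K) (insert \<sigma> H) A'"
        unfolding A'_def using invb_incl(1)[OF I sf faces fresh] by simp
      have sA: "card \<sigma> \<noteq> 1 \<Longrightarrow> \<sigma> \<subseteq> A" using invb_incl(2)[OF I sf faces fresh] by simp
      have sA1: "card \<sigma> = 1 \<Longrightarrow> \<sigma> \<inter> A = {}" using invb_incl(3)[OF I sf faces fresh] by simp
      have tcS: "tcplx fs (Suc i) = insert \<sigma> K" using s1 tc by simp
      have hist': "\<forall>\<tau>\<in>insert \<sigma> H. \<forall>y\<in>\<tau>. \<exists>j\<le>Suc i. {y} \<in> tcplx fs j"
      proof (intro ballI)
        fix \<tau> y assume t: "\<tau> \<in> insert \<sigma> H" "y \<in> \<tau>"
        show "\<exists>j\<le>Suc i. {y} \<in> tcplx fs j"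
        proof (cases "\<tau> = \<sigma>")
          case True
          show ?thesis
          proof (cases "card \<sigma> = 1")
            case True
            hence "\<sigma> = {y}" using t(2) \<open>\<tau> = \<sigma>\<close> by (auto simp: card_Suc_eq)
            thus ?thesis using tcS by auto
          next
            case False
            hence "y \<in> A" using sA t(2) \<open>\<tau> = \<sigma>\<close> by auto
            hence "{y} \<in> tcplx fs i" using invbD(8)[OF I] tci by simp
            thus ?thesis by (intro exI[of _ i]) simp
          qed
        next
          case False
          hence "\<tau> \<in> H" using t(1) by simp
          then obtain j where "j \<le> i" "{y} \<in> tcplx fs j" using hist t(2) by blast
          thus ?thesis by (intro exI[of _ j]) simp
        qed
      qed
      have kp': "\<forall>x\<in>A'. 1 \<le> k' x" using kp unfolding A'_def k'_def by auto
      have kagree: "\<forall>\<rho>\<in>K. \<forall>w\<in>\<rho>. k' w = k w"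
      proof (intro ballI)
        fix \<rho> w assume "\<rho> \<in> K" "w \<in> \<rho>"
        hence "w \<in> A" using invbD(6)[OF I] by auto
        thus "k' w = k w" using sA1 unfolding k'_def by auto
      qed
      have ks': "sum k' A' = num_vincl (take (Suc i) fs)"
      proof (cases "card \<sigma> = 1")
        case True
        have "sum k' A' = sum k' A + sum k' \<sigma>"
        proof -
          have "A \<inter> \<sigma> = {}" using sA1[OF True] by auto
          hence "sum k' (A \<union> \<sigma>) = sum k' A + sum k' \<sigma>"
            using invbD(3)[OF I] sf(1) by (intro sum.union_disjoint) auto
          thus ?thesis unfolding A'_def using True by simp
        qed
        moreover have "sum k' A = sum k A" unfolding k'_def using True sA1 by (intro sum.cong) auto
        moreover have "sum k' \<sigma> = 1"
        proof -
          obtain z where "\<sigma> = {z}" using True by (auto simp: card_Suc_eq)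
          thus ?thesis unfolding k'_def by simp
        qed
        moreover have "isV (fs ! i)" using Incl True unfolding isV_def by simp
        ultimately show ?thesis using nV[OF il] ks by simp
      next
        case False
        have "\<not> isV (fs ! i)" using Incl False unfolding isV_def by simp
        thus ?thesis using nV[OF il] ks False unfolding A'_def k'_def by simp
      qed
      have psi_ge: "psi k K \<le> psi k' (insert \<sigma> K)"
      proof -
        have "psi k' (insert \<sigma> K) = gsum k' \<sigma> + psi k' K"
          unfolding psi_def using sf(3) invbD(1)[OF I] by simp
        moreover have "psi k' K = psi k K"
          unfolding psi_def gsum_def using kagree by (intro sum.cong refl) auto
        moreover have "0 \<le> gsum k' \<sigma>"
        proof (rule gsum_nonneg)
          have "\<sigma> \<subseteq> A'" using invbD(6)[OF I'] by simp
          thus "\<forall>w\<in>\<sigma>. 1 \<le> k' w" using kp' by auto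
        qed
        ultimately show ?thesis by simp
      qed
      have cH: "card (insert \<sigma> H) \<le> card H + 1"
        using invbD(2)[OF I] by (simp add: card_insert_if)
      have cK: "card (insert \<sigma> K) = card K + 1" using sf(3) invbD(1)[OF I] by simp
      have nI1: "num_incl (take (Suc i) fs) = num_incl (take i fs) + 1"
        using nI[OF il] Incl unfolding isI_def by simp
      have MI': "real (card (insert \<sigma> H)) + (2 + C) * real (card (insert \<sigma> K)) - psi k' (insert \<sigma> K)
          \<le> real (num_incl (take (Suc i) fs)) * (3 + C)"
      proof -
        have "real (card (insert \<sigma> H)) \<le> real (card H) + 1" using cH by linarith
        thus ?thesis using MI psi_ge cK nI1 by (simp add: algebra_simps)
      qed
      show ?thesis unfolding P_def using s1 k1 I' hist' kp' ks' MI' tcS by simp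
    next
      case (Contr u v)
      have uv: "u \<noteq> v" and uK: "{u} \<in> K" and vK: "{v} \<in> K" using val Contr tci by auto
      have uA: "u \<in> A" and vA: "v \<in> A" using invbD(6)[OF I uK] invbD(6)[OF I vK] by auto
      have generic: "P (Suc i)"
        if xy: "x \<noteq> y" and xK: "{x} \<in> K" and yK: "{y} \<in> K"
          and c: "card (act_star x H A) \<le> card (act_star y H A)"
          and s1: "states fs ! Suc i = (contract_cplx x y K, H \<union> cone y (act_star x H A), A - {x})"
          and k1: "kk (Suc i) = k(y := k x + k y)" for x y
      proof -
        have xA: "x \<in> A" and yA: "y \<in> A" using invbD(6)[OF I xK] invbD(6)[OF I yK] by auto
        have I': "invb (contract_cplx x y K) (H \<union> cone y (act_star x H A)) (A - {x})"
          by (rule invb_merge[OF I xy xK yK])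
        have hist': "\<forall>\<tau>\<in>H \<union> cone y (act_star x H A). \<forall>z\<in>\<tau>. \<exists>j\<le>Suc i. {z} \<in> tcplx fs j"
        proof (intro ballI)
          fix \<tau> z assume t: "\<tau> \<in> H \<union> cone y (act_star x H A)" "z \<in> \<tau>"
          show "\<exists>j\<le>Suc i. {z} \<in> tcplx fs j"
          proof (cases "\<tau> \<in> H")
            case True
            then obtain j where "j \<le> i" "{z} \<in> tcplx fs j" using hist t(2) by blast
            thus ?thesis by (intro exI[of _ j]) simp
          next
            case False
            then obtain \<tau>0 where t0: "\<tau> = insert y \<tau>0" "\<tau>0 \<in> act_star x H A"
              using t(1) unfolding cone_def by auto
            have "\<tau>0 \<subseteq> A" using t0(2) unfolding act_star_def by simp
            hence "z \<in> A" using t(2) t0(1) yA by auto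
            hence "{z} \<in> tcplx fs i" using invbD(8)[OF I] tci by simp
            thus ?thesis by (intro exI[of _ i]) simp
          qed
        qed
        have kp': "\<forall>z\<in>A - {x}. 1 \<le> (k(y := k x + k y)) z" using kp by auto
        have ks': "sum (k(y := k x + k y)) (A - {x}) = num_vincl (take (Suc i) fs)"
        proof -
          have "\<not> isV (fs ! i)" using Contr unfolding isV_def by simp
          thus ?thesis using sum_merge[OF invbD(3)[OF I] xA yA xy, of k] nV[OF il] ks by simp
        qed
        have "\<not> isI (fs ! i)" using Contr unfolding isI_def by simp
        hence nI1: "num_incl (take (Suc i) fs) = num_incl (take i fs)" using nI[OF il] by simp
        have MI': "real (card (H \<union> cone y (act_star x H A))) + (2 + C) * real (card (contract_cplx x y K))
           - psi (k(y := k x + k y)) (contract_cplx x y K) \<le> real (num_incl (take (Suc i) fs)) * (3 + C)"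
          using merge_num[OF I xy xK yK c kp gCi] MI unfolding nI1 by linarith
        have tcS: "tcplx fs (Suc i) = contract_cplx x y K" using s1 tc by simp
        show ?thesis unfolding P_def using s1 k1 I' hist' kp' ks' MI' by simp
      qed
      show ?thesis
      proof (cases "card (act_star u H A) \<le> card (act_star v H A)")
        case True
        show ?thesis
        proof (rule generic[OF uv uK vK True])
          show "states fs ! Suc i = (contract_cplx u v K, H \<union> cone v (act_star u H A), A - {u})"
            using succ[OF il] sK Contr True by simp
          show "kk (Suc i) = k(v := k u + k v)" using ksucc[OF il] sK Contr True unfolding k_def by simp
        qed
      next
        case False
        show ?thesis
        proof (rule generic[OF uv[symmetric] vK uK])
          show "card (act_star v H A) \<le> card (act_star u H A)" using False by simp
          show "states fs ! Suc i = (contract_cplx v u K, H \<union> cone u (act_star v H A), A - {v})"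
            using succ[OF il] sK Contr False by simp
          show "kk (Suc i) = k(u := k v + k u)" using ksucc[OF il] sK Contr False unfolding k_def
            by (simp add: add.commute)
        qed
      qed
    qed
  qed
  define m where "m = length fs"
  obtain K H A where sK: "states fs ! m = (K, H, A)" by (cases "states fs ! m") auto
  have Pm: "P m" using Pall unfolding m_def by simp
  have I: "invb K H A" and kp: "\<forall>x\<in>A. 1 \<le> kk m x" and ks: "sum (kk m) A = num_vincl (take m fs)"
    and MI: "real (card H) + (2 + C) * real (card K) - psi (kk m) K \<le> real (num_incl (take m fs)) * (3 + C)"
    using Pm sK unfolding P_def by auto
  have gCm: "\<forall>\<rho>\<in>K. gsum (kk m) \<rho> \<le> C" using gC[OF _ sK I kp ks] unfolding m_def by simp
  have "psi (kk m) K \<le> real (card K) * C"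
    unfolding psi_def using gCm by (intro sum_bounded_above) auto
  hence H1: "real (card H) \<le> real (num_incl fs) * (3 + C)"
    using MI C0 unfolding m_def by (simp add: algebra_simps)
  have hl: "hat_last fs = H"
  proof -
    have "last (states fs) = states fs ! m"
    proof -
      have ne: "states_from ({}, {}, {}) fs \<noteq> []" by (cases fs) auto
      show ?thesis unfolding states_def m_def using last_conv_nth[OF ne] by (simp add: length_states_from)
    qed
    thus ?thesis using sK unfolding hat_last_def by simp
  qed
  have "real (num_incl fs) * (3 + C) \<le> real (num_incl fs) + 2 * (real D + 1) * real (num_incl fs)
               * (1 + log 2 (real N))"
  proof -
    have L: "0 \<le> log 2 (real N)" by (rule log_nat_nonneg)
    have "3 + C \<le> 1 + 2 * (real D + 1) * (1 + log 2 (real N))"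
      unfolding C_def using L by (simp add: algebra_simps)
    hence "real (num_incl fs) * (3 + C) \<le> real (num_incl fs) * (1 + 2 * (real D + 1) * (1 + log 2 (real N)))"
      by (intro mult_left_mono) auto
    thus ?thesis by (simp add: algebra_simps)
  qed
  thus ?thesis using H1 hl unfolding D_def N_def by simp
qed


end
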